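(* Let $B>0$, $0<\epsilon<1$, $T>4\epsilon$, and let $z\in W^{1,\infty}\bigl(([0,1]\times[0,T])^2\bigr)$, $z=z(x,t,y,s)$, satisfy $|z(x,t,y,s)|\le B$ for all $(x,t),(y,s)\in[0,1]\times[0,T]$. Then there is a constant $C>0$, independent of $z$ and $\epsilon$, such that $$\Bigl|\int_0^1\int_0^T\int_0^1\int_0^T\Bigl(\overline\varphi^{y,s}_\epsilon(x,t)\,\partial_tz(x,t,y,s)+z(x,t,y,s)\,\partial_t\overline\varphi^{y,s}_\epsilon(x,t)\Bigr)dt\,dx\,ds\,dy\Bigr|\le CB\epsilon.$$
   Context: $\sigma=\tanh$, $\alpha=3\ln(1/\epsilon)/\epsilon$, $\beta=9\ln(1/\epsilon)/\epsilon^3$, $\chi_\epsilon(t)=\frac{1}{2\sigma(\alpha\epsilon)}(\sigma(\alpha(t-2\epsilon))-\sigma(\alpha(t-T+2\epsilon)))$, $\rho_\epsilon(x)=\frac{\sigma(\beta(x+\epsilon^6))-\sigma(\beta(x-\epsilon^6))}{2\epsilon^6}$, and for $(y,s)\in[0,1]\times[0,T]$, $\overline\varphi^{y,s}_\epsilon(x,t)=\chi_\epsilon(\tfrac{t+s}2)\rho_\epsilon(x-y)\rho_\epsilon(t-s)$ for $(x,t)\in[0,1]\times[0,T]$. *)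

theory Defs
  imports "HOL-Analysis.Analysis"
begin

definition alpha_eps :: "real \<Rightarrow> real" where
  "alpha_eps \<epsilon> = 3 * ln (1 / \<epsilon>) / \<epsilon>"

definition beta_eps :: "real \<Rightarrow> real" where
  "beta_eps \<epsilon> = 9 * ln (1 / \<epsilon>) / \<epsilon> ^ 3"

definition chi_eps :: "real \<Rightarrow> real \<Rightarrow> real \<Rightarrow> real" where
  "chi_eps \<epsilon> T t =
     (tanh (alpha_eps \<epsilon> * (t - 2 * \<epsilon>)) - tanh (alpha_eps \<epsilon> * (t - T + 2 * \<epsilon>)))
     / (2 * tanh (alpha_eps \<epsilon> * \<epsilon>))"

definition rho_eps :: "real \<Rightarrow> real \<Rightarrow> real" where
  "rho_eps \<epsilon> x =
     (tanh (beta_eps \<epsilon> * (x + \<epsilon> ^ 6)) - tanh (beta_eps \<epsilon> * (x - \<epsilon> ^ 6))) / (2 * \<epsilon> ^ 6)"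

text \<open>phibar_eps epsilon T y s x t = the test function with parameters (y,s), evaluated at (x,t)\<close>
definition phibar_eps :: "real \<Rightarrow> real \<Rightarrow> real \<Rightarrow> real \<Rightarrow> real \<Rightarrow> real \<Rightarrow> real" where
  "phibar_eps \<epsilon> T y s x t = chi_eps \<epsilon> T ((t + s) / 2) * rho_eps \<epsilon> (x - y) * rho_eps \<epsilon> (t - s)"

end

theory Submission
  imports Defs
begin

lemma seq_deriv:
  fixes f :: "real \<Rightarrow> real"
  assumes "(f has_real_derivative D) (at t)" "h \<longlonglongrightarrow> 0" "\<And>n. h n \<noteq> 0"
  shows "(\<lambda>n. (f (t + h n) - f t) / h n) \<longlonglongrightarrow> D"
proof -
  have "(\<lambda>k. (f (t + k) - f t) / k) \<midarrow>0\<rightarrow> D" using assms(1) by (simp add: DERIV_def)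
  then show ?thesis using assms(2,3) LIMSEQ_SEQ_conv[of 0 "\<lambda>k. (f (t + k) - f t) / k" D] by blast
qed

lemma lip_ftc:
  fixes g g' :: "real \<Rightarrow> real"
  assumes ab: "a < b"
    and lip: "\<And>t t'. t \<in> {a..b} \<Longrightarrow> t' \<in> {a..b} \<Longrightarrow> \<bar>g t - g t'\<bar> \<le> L * \<bar>t - t'\<bar>"
    and ae: "AE t in lborel. t \<in> {a<..<b} \<longrightarrow> (g has_real_derivative g' t) (at t)"
  shows "(g' has_integral (g b - g a)) {a..b}"
proof -
  obtain N where N: "{x \<in> space lborel. \<not> (x \<in> {a<..<b} \<longrightarrow> (g has_real_derivative g' x) (at x))} \<subseteq> N"
     "emeasure lborel N = 0" "N \<in> sets lborel"
    using ae by (rule AE_E)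
  have negN: "negligible N"
    using N by (auto simp: negligible_iff_null_sets intro!: null_sets_completionI)
  define S where "S = {a<..<b} - N"
  have negS: "negligible ({a..b} - S)"
  proof -
    have "{a..b} - S \<subseteq> N \<union> {a, b}" unfolding S_def by auto
    moreover have "negligible (N \<union> {a,b})" using negN by auto
    ultimately show ?thesis using negligible_subset by blast
  qed
  have derS: "\<And>t. t \<in> S \<Longrightarrow> (g has_real_derivative g' t) (at t)"
    using N(1) unfolding S_def by auto
  define G where "G t = g (max a (min b t))" for t
  have L0: "L \<ge> 0"
  proof -
    have "0 \<le> L * \<bar>a - b\<bar>" using lip[of a b] ab by (meson abs_ge_zero atLeastAtMost_iff order.trans less_imp_le order_refl)
    then show "L \<ge> 0" using ab by (simp add: zero_le_mult_iff)
  qed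
  have Glip: "\<bar>G t - G t'\<bar> \<le> L * \<bar>t - t'\<bar>" for t t'
  proof -
    have "\<bar>G t - G t'\<bar> \<le> L * \<bar>max a (min b t) - max a (min b t')\<bar>"
      unfolding G_def using ab by (intro lip) auto
    also have "\<dots> \<le> L * \<bar>t - t'\<bar>"
    proof -
      have "\<bar>max a (min b t) - max a (min b t')\<bar> \<le> \<bar>t - t'\<bar>" by (simp add: max_def min_def abs_if)
      then show ?thesis using L0 by (simp add: mult_left_mono)
    qed
    finally show ?thesis .
  qed
  have Gcont: "continuous_on A G" for A
  proof -
    have "L-lipschitz_on A G" unfolding lipschitz_on_def dist_real_def using L0 Glip by auto
    then show ?thesis by (rule lipschitz_on_continuous_on)
  qed
  have Gg: "t \<in> {a..b} \<Longrightarrow> G t = g t" for t unfolding G_def by auto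
  define h where "h n = inverse (real (Suc (Suc n)))" for n
  have hpos: "h n > 0" for n unfolding h_def by auto
  have hne: "h n \<noteq> 0" for n using hpos[of n] by simp
  have hle: "h n \<le> 1/2" for n unfolding h_def by (simp add: field_simps)
  have hlim: "h \<longlonglongrightarrow> 0" unfolding h_def by (rule LIMSEQ_Suc[OF LIMSEQ_inverse_real_of_nat])
  define Q where "Q x = integral {a-1..x} G" for x
  have Qd: "(Q has_real_derivative G u) (at u)" if "a - 1 < u" "u < b + 2" for u
  proof -
    have "(Q has_real_derivative G u) (at u within {a-1..b+2})"
      unfolding Q_def using that by (intro integral_has_real_derivative Gcont) auto
    then show ?thesis using that by (simp add: at_within_Icc_at)
  qed
  define D where "D n t = (G (t + h n) - G t) / h n" for n t
  have Dint: "(D n has_integral ((Q (b + h n) - Q b) / h n - (Q (a + h n) - Q a) / h n)) {a..b}" for n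
  proof -
    define P where "P t = (Q (t + h n) - Q t) / h n" for t
    have "(D n has_integral (P b - P a)) {a..b}"
    proof (rule fundamental_theorem_of_calculus)
      show "a \<le> b" using ab by simp
      fix x assume x: "x \<in> {a..b}"
      show "(P has_vector_derivative D n x) (at x within {a..b})"
      proof -
        have d1: "((\<lambda>z. Q (z + h n)) has_real_derivative G (x + h n)) (at x)"
          using Qd[of "x + h n"] x hpos[of n] hle[of n] by (simp add: DERIV_shift)
        have d2: "(Q has_real_derivative G x) (at x)"
          using Qd[of x] x by simp
        have "(P has_real_derivative ((G (x + h n) * 1 - G x) / h n)) (at x)"
          unfolding P_def using DERIV_cdivide[OF DERIV_diff[OF d1 d2]] by simp
        then show ?thesis
          unfolding D_def by (simp add: has_real_derivative_iff_has_vector_derivative[symmetric] has_field_derivative_at_within)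
      qed
    qed
    then have "(D n has_integral (P b - P a)) {a..b}" .
    then show ?thesis by (simp add: P_def)
  qed
  define f where "f n t = indicator S t * D n t" for n t
  have fint: "f n integrable_on {a..b}" and fval: "integral {a..b} (f n) = (Q (b + h n) - Q b) / h n - (Q (a + h n) - Q a) / h n" for n
  proof -
    have "(f n has_integral ((Q (b + h n) - Q b) / h n - (Q (a + h n) - Q a) / h n)) {a..b}"
      by (rule has_integral_spike[OF negS _ Dint]) (auto simp: f_def S_def indicator_def)
    then show "f n integrable_on {a..b}" "integral {a..b} (f n) = (Q (b + h n) - Q b) / h n - (Q (a + h n) - Q a) / h n"
      by (auto simp: has_integral_iff)
  qed
  define gl where "gl t = indicator S t * g' t" for t
  have fbound: "norm (f n t) \<le> L" for n t
  proof -
    have "\<bar>D n t\<bar> \<le> L"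
      using Glip[of "t + h n" t] hpos[of n] unfolding D_def by (simp add: divide_le_eq abs_div)
    then show ?thesis unfolding f_def indicator_def using L0 by auto
  qed
  have fconv: "(\<lambda>n. f n t) \<longlonglongrightarrow> gl t" if "t \<in> {a..b}" for t
  proof (cases "t \<in> S")
    case False
    then show ?thesis unfolding f_def gl_def by simp
  next
    case True
    then have tS: "a < t" "t < b" unfolding S_def by auto
    have ev: "eventually (\<lambda>n. h n < b - t) sequentially"
      using hlim tS by (intro order_tendstoD(2)) auto
    have "(\<lambda>n. (g (t + h n) - g t) / h n) \<longlonglongrightarrow> g' t"
      by (intro seq_deriv derS[OF True] hlim hne)
    then have "(\<lambda>n. f n t) \<longlonglongrightarrow> g' t"
    proof (rule Lim_transform_eventually)
      show "\<forall>\<^sub>F n in sequentially. (g (t + h n) - g t) / h n = f n t"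
        using ev
      proof (rule eventually_mono)
        fix n assume "h n < b - t"
        then show "(g (t + h n) - g t) / h n = f n t"
          using True tS hpos[of n] unfolding f_def D_def by (simp add: Gg)
      qed
    qed
    then show ?thesis by (simp add: gl_def True)
  qed
  have Lint: "(\<lambda>_. L) integrable_on {a..b}" by (rule integrable_continuous_interval) (rule continuous_on_const)
  have dc: "gl integrable_on {a..b}" "(\<lambda>n. integral {a..b} (f n)) \<longlonglongrightarrow> integral {a..b} gl"
    using dominated_convergence[OF fint Lint fbound fconv] by auto
  have lim2: "(\<lambda>n. integral {a..b} (f n)) \<longlonglongrightarrow> G b - G a"
    unfolding fval
    using ab hle by (intro tendsto_diff seq_deriv Qd hlim hne) auto
  have "integral {a..b} gl = g b - g a"
    using LIMSEQ_unique[OF dc(2) lim2] ab by (simp add: Gg)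
  then have glI: "(gl has_integral (g b - g a)) {a..b}" using dc(1) by (simp add: has_integral_iff)
  show ?thesis
    by (rule has_integral_spike[OF negS _ glI]) (auto simp: gl_def S_def)
qed



lemma lip1_aux:
  fixes f f' :: "real \<Rightarrow> real"
  assumes d: "\<And>x. (f has_real_derivative f' x) (at x)" and b: "\<And>x. \<bar>f' x\<bar> \<le> 1"
  shows "\<bar>f p - f q\<bar> \<le> \<bar>p - q\<bar>"
proof -
  have *: "f u - f v \<le> u - v \<and> f v - f u \<le> u - v" if "v \<le> u" for u v
  proof -
    have d1: "\<exists>y. ((\<lambda>x. x - f x) has_real_derivative y) (at x) \<and> y \<ge> 0" for x
    proof -
      have "((\<lambda>x. x - f x) has_real_derivative (1 - f' x)) (at x)" using d[of x] by (auto intro!: derivative_eq_intros)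
      moreover have "1 - f' x \<ge> 0" using b[of x] by (simp add: abs_le_iff)
      ultimately show ?thesis by blast
    qed
    have d2: "\<exists>y. ((\<lambda>x. x + f x) has_real_derivative y) (at x) \<and> y \<ge> 0" for x
    proof -
      have "((\<lambda>x. x + f x) has_real_derivative (1 + f' x)) (at x)" using d[of x] by (auto intro!: derivative_eq_intros)
      moreover have "1 + f' x \<ge> 0" using b[of x] by (simp add: abs_le_iff)
      ultimately show ?thesis by blast
    qed
    have "(\<lambda>x. x - f x) v \<le> (\<lambda>x. x - f x) u"
      using that d1 by (rule DERIV_nonneg_imp_nondecreasing)
    moreover have "(\<lambda>x. x + f x) v \<le> (\<lambda>x. x + f x) u"
      using that d2 by (rule DERIV_nonneg_imp_nondecreasing)
    ultimately show ?thesis by simp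
  qed
  show ?thesis using *[of q p] *[of p q] by (cases "q \<le> p") (auto simp: abs_if)
qed

lemma tanh_lip: "\<bar>tanh p - tanh q\<bar> \<le> \<bar>p - (q::real)\<bar>"
proof (rule lip1_aux)
  show "(tanh has_real_derivative (1 - tanh x ^ 2)) (at x)" for x :: real
    by (auto intro!: derivative_eq_intros)
  show "\<bar>1 - tanh x ^ 2\<bar> \<le> 1" for x :: real
  proof -
    have "tanh x ^ 2 \<le> 1" using tanh_real_bounds[of x] by (auto simp: abs_square_le_1 abs_less_iff)
    then show ?thesis by auto
  qed
qed

lemma lncosh_lip: "\<bar>ln (cosh p) - ln (cosh q)\<bar> \<le> \<bar>p - (q::real)\<bar>"
proof (rule lip1_aux)
  show "((\<lambda>x. ln (cosh x)) has_real_derivative tanh x) (at x)" for x :: real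
    by (auto intro!: derivative_eq_intros simp: tanh_def)
  show "\<bar>tanh x\<bar> \<le> 1" for x :: real using tanh_real_bounds[of x] by auto
qed

lemma one_plus_tanh_le: "1 + tanh p \<le> 2 * exp (2 * (p::real))"
proof -
  define e where "e = exp (-2 * p)"
  have e: "e > 0" unfolding e_def by simp
  have "1 + tanh p = 2 / (1 + e)" unfolding tanh_real_altdef e_def[symmetric] using e
    by (simp add: field_simps)
  also have "\<dots> \<le> 2 / e" using e by (simp add: frac_le)
  also have "\<dots> = 2 * exp (2 * p)" unfolding e_def by (simp add: exp_minus field_simps)
  finally show ?thesis .
qed

lemma one_minus_tanh_le: "1 - tanh p \<le> 2 * exp (- 2 * (p::real))"
proof -
  define e where "e = exp (-2 * p)"
  have e: "e > 0" unfolding e_def by simp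
  have "1 - tanh p = 2 * e / (1 + e)" unfolding tanh_real_altdef e_def[symmetric] using e
    by (simp add: field_simps)
  also have "\<dots> \<le> 2 * e" using e by (simp add: divide_le_eq)
  finally show ?thesis unfolding e_def .
qed

lemma exp_mult_ln: assumes "0 < e" shows "exp (- (real k * ln (1 / e))) = e ^ k"
proof -
  have "exp (- (real k * ln (1 / e))) = exp (real k * ln e)" using assms by (simp add: ln_div)
  also have "\<dots> = exp (ln e) ^ k" by (rule exp_of_nat_mult)
  finally show ?thesis using assms by simp
qed

lemma frac_aux: "((1 / w) ^ 2 - 1) / ((1 / w) ^ 2 + 1) = (1 - w ^ 2) / (1 + (w::real) ^ 2)" if "w > 0"
proof -
  have "w^2 > 0" using that by simp
  have "(1 / w) ^ 2 = 1 / w^2" by (simp add: power_divide)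
  then have "((1 / w) ^ 2 - 1) / ((1 / w) ^ 2 + 1) = (1 / w^2 - 1) / (1 / w^2 + 1)" by simp
  also have "\<dots> = (1 - w^2) / (1 + w^2)"
  proof -
    define u where "u = w^2"
    have "u > 0" using \<open>w^2 > 0\<close> u_def by simp
    then have e1: "1 / u - 1 = (1 - u) / u" and e2: "1 / u + 1 = (1 + u) / u"
      by (simp_all add: diff_divide_distrib add_divide_distrib)
    have "(1 / u - 1) / (1 / u + 1) = (1 - u) / (1 + u)"
      unfolding e1 e2 using \<open>u > 0\<close> by simp
    then show ?thesis unfolding u_def .
  qed
  finally show ?thesis .
qed

lemma tanh_alpha: assumes "0 < e" "e < 1"
  shows "tanh (alpha_eps e * e) = (1 - e ^ 6) / (1 + e ^ 6)"
proof -
  have "alpha_eps e * e = ln (1 / e ^ 3)" unfolding alpha_eps_def using assms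
    by (simp add: ln_div ln_realpow)
  then have "tanh (alpha_eps e * e) = ((1 / e ^ 3) ^ 2 - 1) / ((1 / e ^ 3) ^ 2 + 1)"
    using assms by (simp add: tanh_ln_real)
  also have "\<dots> = (1 - (e ^ 3) ^ 2) / (1 + (e ^ 3) ^ 2)"
  proof -
    have "e ^ 3 > 0" using assms by simp
    from frac_aux[OF this] show ?thesis .
  qed
  also have "\<dots> = (1 - e ^ 6) / (1 + e ^ 6)" by (simp flip: power_mult)
  finally show ?thesis .
qed



lemma eps_facts:
  assumes "0 < e" "e < (1::real)"
  shows "ln (1/e) > 0" "alpha_eps e > 0" "beta_eps e > 0" "ln (1/e) \<le> (1 - e) / e"
proof -
  show L: "ln (1/e) > 0" using assms by simp
  show "alpha_eps e > 0" unfolding alpha_eps_def using L assms by simp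
  show "beta_eps e > 0" unfolding beta_eps_def using L assms by simp
  have "ln (1/e) \<le> 1/e - 1" using assms by (intro ln_le_minus_one) simp
  also have "\<dots> = (1 - e) / e" using assms by (simp add: field_simps)
  finally show "ln (1/e) \<le> (1 - e) / e" .
qed

lemma chi_sym: "chi_eps e T (T - t) = chi_eps e T t"
proof -
  have 1: "alpha_eps e * (T - t - 2 * e) = - (alpha_eps e * (t - T + 2 * e))" by algebra
  have 2: "alpha_eps e * (T - t - T + 2 * e) = - (alpha_eps e * (t - 2 * e))" by algebra
  show ?thesis unfolding chi_eps_def 1 2 tanh_minus by simp
qed

lemma rho_even: "rho_eps e (- x) = rho_eps e x"
proof -
  have 1: "beta_eps e * (- x + e ^ 6) = - (beta_eps e * (x - e ^ 6))" by algebra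
  have 2: "beta_eps e * (- x - e ^ 6) = - (beta_eps e * (x + e ^ 6))" by algebra
  show ?thesis unfolding rho_eps_def 1 2 tanh_minus by simp
qed

lemma chi_nonneg:
  assumes "0 < e" "e < 1" "4 * e < T"
  shows "0 \<le> chi_eps e T t"
proof -
  have a: "alpha_eps e > 0" using eps_facts assms by auto
  have "alpha_eps e * (t - T + 2 * e) \<le> alpha_eps e * (t - 2 * e)"
    using a assms by (intro mult_left_mono) auto
  then have "0 \<le> tanh (alpha_eps e * (t - 2 * e)) - tanh (alpha_eps e * (t - T + 2 * e))" by simp
  moreover have "0 < tanh (alpha_eps e * e)" using a assms by simp
  ultimately show ?thesis unfolding chi_eps_def by simp
qed

lemma rho_nonneg:
  assumes "0 < e" "e < 1"
  shows "0 \<le> rho_eps e x"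
proof -
  have b: "beta_eps e > 0" using eps_facts assms by auto
  have "beta_eps e * (x - e ^ 6) \<le> beta_eps e * (x + e ^ 6)"
    using b assms by (intro mult_left_mono) auto
  then show ?thesis unfolding rho_eps_def using assms by simp
qed

lemma rho_le_beta:
  assumes "0 < e" "e < 1"
  shows "rho_eps e x \<le> beta_eps e"
proof -
  have b: "beta_eps e > 0" using eps_facts assms by auto
  have "tanh (beta_eps e * (x + e ^ 6)) - tanh (beta_eps e * (x - e ^ 6))
      \<le> \<bar>beta_eps e * (x + e ^ 6) - beta_eps e * (x - e ^ 6)\<bar>"
    using tanh_lip by (rule abs_le_D1)
  also have "\<dots> = beta_eps e * (2 * e ^ 6)" using b assms by (simp add: algebra_simps)
  finally show ?thesis unfolding rho_eps_def using assms by (simp add: divide_le_eq mult_ac)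
qed

lemma chi_le:
  assumes "0 < e" "e < 1" "4 * e < T"
  shows "chi_eps e T t \<le> 3 * T / e ^ 2"
proof -
  define L where "L = ln (1/e)"
  have L: "L > 0" "L \<le> (1 - e) / e" using eps_facts[OF assms(1,2)] unfolding L_def by auto
  have al: "alpha_eps e = 3 * L / e" unfolding alpha_eps_def L_def ..
  have a: "alpha_eps e > 0" using eps_facts assms by auto
  define N where "N = tanh (alpha_eps e * (t - 2 * e)) - tanh (alpha_eps e * (t - T + 2 * e))"
  have "N \<le> \<bar>alpha_eps e * (t - 2 * e) - alpha_eps e * (t - T + 2 * e)\<bar>"
    unfolding N_def using tanh_lip by (rule abs_le_D1)
  also have "\<dots> = alpha_eps e * (T - 4 * e)" using a assms by (simp add: algebra_simps)
  also have "\<dots> \<le> alpha_eps e * T" using a assms by simp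
  finally have N: "N \<le> alpha_eps e * T" .
  have e6: "e ^ 6 \<le> e" "e ^ 6 < 1" "0 < e ^ 6"
    using assms power_decreasing[of 1 6 e] by (auto simp: power_less_one_iff)
  have den: "2 * tanh (alpha_eps e * e) = 2 * (1 - e ^ 6) / (1 + e ^ 6)"
    using tanh_alpha[OF assms(1,2)] by simp
  have p6: "0 < 1 + e ^ 6" using e6(3) by linarith
  have q6: "0 < 2 * (1 - e ^ 6)" using e6(2) by auto
  have denpos: "0 < 2 * (1 - e ^ 6) / (1 + e ^ 6)" using q6 p6 by (rule divide_pos_pos)
  have "chi_eps e T t = N / (2 * (1 - e ^ 6) / (1 + e ^ 6))"
    unfolding chi_eps_def N_def den ..
  also have "\<dots> \<le> alpha_eps e * T / (2 * (1 - e ^ 6) / (1 + e ^ 6))"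
    using N denpos by (intro divide_right_mono) auto
  also have "\<dots> = alpha_eps e * T * (1 + e ^ 6) / (2 * (1 - e ^ 6))"
    using e6 by (simp add: field_simps)
  also have "\<dots> \<le> 3 * T / e ^ 2"
  proof -
    have "3 * L / e \<le> 3 * ((1 - e) / e) / e"
      using L(2) assms by (intro divide_right_mono mult_left_mono) auto
    then have "alpha_eps e \<le> 3 * (1 - e) / e ^ 2"
      unfolding al by (simp add: power2_eq_square)
    then have f1: "alpha_eps e * T \<le> (3 * (1 - e) / e ^ 2) * T"
      using assms by (intro mult_right_mono) auto
    have f2: "0 \<le> (3 * (1 - e) / e ^ 2) * T" using assms by auto
    have f3: "1 + e ^ 6 \<le> 2" and f4: "0 \<le> 1 + e ^ 6" using e6 p6 by auto
    have "alpha_eps e * T * (1 + e ^ 6) \<le> (3 * (1 - e) / e ^ 2) * T * 2"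
      by (rule mult_mono[OF f1 f3 f2 f4])
    also have "\<dots> = (6 * T / e ^ 2) * (1 - e)" by simp
    also have "\<dots> \<le> (6 * T / e ^ 2) * (1 - e ^ 6)"
    proof (rule mult_left_mono)
      show "1 - e \<le> 1 - e ^ 6" using e6(1) by simp
      have "0 \<le> T" using assms by linarith
      then show "0 \<le> 6 * T / e ^ 2" by simp
    qed
    also have "\<dots> = (3 * T / e ^ 2) * (2 * (1 - e ^ 6))" by simp
    finally show ?thesis using e6 by (simp add: divide_le_eq)
  qed
  finally show ?thesis .
qed



lemma key_small:
  assumes "0 < e" "e < 1/2" "4 * e < T" "0 \<le> r"
  shows "chi_eps e T (r / 2) * rho_eps e r \<le> 2 * e"
proof -
  have e1: "e < 1" using assms by simp
  define L where "L = ln (1/e)"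
  have L: "L > 0" using eps_facts[OF assms(1) e1] unfolding L_def by auto
  have al: "alpha_eps e = 3 * L / e" unfolding alpha_eps_def L_def ..
  have be: "beta_eps e = 9 * L / e ^ 3" unfolding beta_eps_def L_def ..
  have a: "alpha_eps e > 0" and b: "beta_eps e > 0" using eps_facts[OF assms(1) e1] by auto
  have e6: "e ^ 6 \<le> 1 / 64" "0 < e ^ 6"
  proof -
    have "e ^ 6 \<le> (1/2) ^ 6" using assms by (intro power_mono) auto
    then show "e ^ 6 \<le> 1 / 64" by (simp add: power_divide)
    show "0 < e ^ 6" using assms by simp
  qed
  have e3: "e ^ 3 \<le> 1 / 8" "0 < e ^ 3"
  proof -
    have "e ^ 3 \<le> (1/2) ^ 3" using assms by (intro power_mono) auto
    then show "e ^ 3 \<le> 1 / 8" by (simp add: power_divide)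
    show "0 < e ^ 3" using assms by simp
  qed
  define N where "N = tanh (alpha_eps e * (r / 2 - 2 * e)) - tanh (alpha_eps e * (r / 2 - T + 2 * e))"
  have "N \<le> 1 + tanh (alpha_eps e * (r / 2 - 2 * e))"
    unfolding N_def using tanh_real_gt_neg1[of "alpha_eps e * (r / 2 - T + 2 * e)"] by linarith
  also have "\<dots> \<le> 2 * exp (2 * (alpha_eps e * (r / 2 - 2 * e)))" by (rule one_plus_tanh_le)
  also have "2 * (alpha_eps e * (r / 2 - 2 * e)) = alpha_eps e * (r - 4 * e)" by (simp add: algebra_simps)
  finally have N: "N \<le> 2 * exp (alpha_eps e * (r - 4 * e))" .
  have dpos: "0 < tanh (alpha_eps e * e)" using a assms by simp
  have N0: "0 \<le> N" using chi_nonneg[OF assms(1) e1 assms(3), of "r/2"] dpos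
    unfolding chi_eps_def N_def[symmetric] by (simp add: zero_le_divide_iff)
  have gen: "1 \<le> 2 * ((1 - d) / (1 + d))" if "0 \<le> d" "d \<le> 1/64" for d :: real
  proof -
    have "1 + d \<le> 2 * (1 - d)" "0 < 1 + d" using that by auto
    then have "1 \<le> (2 * (1 - d)) / (1 + d)" by (simp add: le_divide_eq)
    then show ?thesis by simp
  qed
  have den: "1 \<le> 2 * tanh (alpha_eps e * e)"
    unfolding tanh_alpha[OF assms(1) e1] using e6 by (intro gen) auto
  have chi: "chi_eps e T (r / 2) \<le> 2 * exp (alpha_eps e * (r - 4 * e))"
  proof -
    have "chi_eps e T (r / 2) = N / (2 * tanh (alpha_eps e * e))" unfolding chi_eps_def N_def ..
    also have "\<dots> \<le> N / 1" using den a assms by (intro divide_left_mono N0) auto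
    also have "\<dots> = N" by simp
    finally show ?thesis using N by linarith
  qed
  have rho: "rho_eps e r \<le> exp (- 2 * (beta_eps e * (r - e ^ 6))) / e ^ 6"
  proof -
    have "tanh (beta_eps e * (r + e ^ 6)) - tanh (beta_eps e * (r - e ^ 6)) \<le> 1 - tanh (beta_eps e * (r - e ^ 6))"
      using tanh_real_lt_1[of "beta_eps e * (r + e ^ 6)"] by linarith
    also have "\<dots> \<le> 2 * exp (- 2 * (beta_eps e * (r - e ^ 6)))" by (rule one_minus_tanh_le)
    finally show ?thesis unfolding rho_eps_def using e6 by (simp add: divide_le_eq field_simps)
  qed
  have "chi_eps e T (r / 2) * rho_eps e r \<le> 2 * exp (alpha_eps e * (r - 4 * e)) * (exp (- 2 * (beta_eps e * (r - e ^ 6))) / e ^ 6)"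
    using chi rho chi_nonneg[OF assms(1) e1 assms(3), of "r/2"] rho_nonneg[OF assms(1) e1, of r]
    by (intro mult_mono) auto
  also have "\<dots> = 2 * exp (alpha_eps e * (r - 4 * e) - 2 * (beta_eps e * (r - e ^ 6))) / e ^ 6"
    by (simp add: exp_diff exp_minus exp_add field_simps)
  also have "\<dots> \<le> 2 * exp (- (real 9 * L)) / e ^ 6"
  proof -
    have ab: "alpha_eps e \<le> 2 * beta_eps e"
    proof -
      have 1: "3 * L / e = (3 * L * e ^ 2) / e ^ 3" using assms by (simp add: power2_eq_square power3_eq_cube)
      have "e ^ 2 \<le> 1" using assms by (simp add: power_le_one)
      then have "3 * L * e ^ 2 \<le> 18 * L" using L by (simp add: mult_left_le)
      then have "(3 * L * e ^ 2) / e ^ 3 \<le> 18 * L / e ^ 3" using e3 by (intro divide_right_mono) auto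
      then show ?thesis unfolding al be 1 by simp
    qed
    have "alpha_eps e * r \<le> 2 * beta_eps e * r" using ab assms by (intro mult_right_mono) auto
    moreover have "alpha_eps e * (4 * e) = 12 * L" unfolding al using assms by simp
    moreover have "2 * beta_eps e * e ^ 6 \<le> 3 * L"
    proof -
      have "2 * beta_eps e * e ^ 6 = 18 * L * e ^ 3" unfolding be using e3
        by (simp add: field_simps)
      also have "\<dots> \<le> 18 * L * (1/8)" using e3 L by (intro mult_left_mono) auto
      finally show ?thesis using L by linarith
    qed
    ultimately have "alpha_eps e * (r - 4 * e) - 2 * (beta_eps e * (r - e ^ 6)) \<le> - (real 9 * L)"
      by (simp add: algebra_simps)
    then show ?thesis using e6 by (intro divide_right_mono mult_left_mono) auto
  qed
  also have "\<dots> = 2 * e ^ 9 / e ^ 6" unfolding L_def using exp_mult_ln[OF assms(1), of 9] by simp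
  also have "\<dots> = 2 * e ^ 3" using assms by (simp add: field_simps)
  also have "\<dots> \<le> 2 * e"
    using assms power_decreasing[of 1 3 e] by simp
  finally show ?thesis .
qed



lemma key_big:
  assumes "1/2 \<le> e" "e < 1" "4 * e < T" "0 \<le> r"
  shows "chi_eps e T (r / 2) * rho_eps e r \<le> 1728 * T * e"
proof -
  have e0: "0 < e" using assms by simp
  have T0: "0 < T" using assms by simp
  have e2: "1/4 \<le> e ^ 2"
  proof -
    have "(1/2) ^ 2 \<le> e ^ 2" using assms by (intro power_mono) auto
    then show ?thesis by (simp add: power_divide)
  qed
  have e3: "1/8 \<le> e ^ 3"
  proof -
    have "(1/2) ^ 3 \<le> e ^ 3" using assms by (intro power_mono) auto
    then show ?thesis by (simp add: power_divide)
  qed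
  have chi: "chi_eps e T (r / 2) \<le> 12 * T"
  proof -
    have "3 * T / e ^ 2 \<le> 3 * T / (1/4)" using e2 T0 by (intro divide_left_mono) auto
    then show ?thesis using chi_le[OF e0 assms(2,3), of "r/2"] by simp
  qed
  have rho: "rho_eps e r \<le> 72"
  proof -
    have L: "ln (1/e) \<le> 1"
    proof -
      have "ln (1/e) \<le> (1 - e) / e" using eps_facts[OF e0 assms(2)] by auto
      also have "\<dots> \<le> 1" using assms by (simp add: divide_le_eq)
      finally show ?thesis .
    qed
    have "beta_eps e = 9 * ln (1/e) / e ^ 3" unfolding beta_eps_def ..
    also have "\<dots> \<le> 9 / e ^ 3" using L e0 by (intro divide_right_mono) auto
    also have "\<dots> \<le> 9 / (1/8)" using e3 e0 by (intro divide_left_mono) auto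
    finally have "beta_eps e \<le> 72" by simp
    then show ?thesis using rho_le_beta[OF e0 assms(2), of r] by simp
  qed
  have "chi_eps e T (r / 2) * rho_eps e r \<le> (12 * T) * 72"
    using chi rho chi_nonneg[OF e0 assms(2,3), of "r/2"] rho_nonneg[OF e0 assms(2), of r] T0
    by (intro mult_mono) auto
  also have "\<dots> \<le> 1728 * T * e" using assms T0 by simp
  finally show ?thesis .
qed

lemma key:
  assumes "0 < e" "e < 1" "4 * e < T" "0 \<le> r"
  shows "chi_eps e T (r / 2) * rho_eps e r \<le> (2 + 1728 * T) * e"
proof (cases "e < 1/2")
  case True
  then have "chi_eps e T (r / 2) * rho_eps e r \<le> 2 * e" using assms by (intro key_small) auto
  also have "\<dots> \<le> (2 + 1728 * T) * e" using assms by (intro mult_right_mono) auto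
  finally show ?thesis .
next
  case False
  then have "chi_eps e T (r / 2) * rho_eps e r \<le> 1728 * T * e" using assms by (intro key_big) auto
  also have "\<dots> \<le> (2 + 1728 * T) * e" using assms by (simp add: algebra_simps)
  finally show ?thesis .
qed

lemma lncosh_deriv: "((\<lambda>x. ln (cosh x)) has_real_derivative tanh x) (at x)" for x :: real
  by (auto intro!: derivative_eq_intros simp: tanh_def)

lemma rho_int:
  assumes "0 < e" "e < 1"
  shows "((\<lambda>x. rho_eps e (x - y)) integrable_on {0..1})"
    "integral {0..1} (\<lambda>x. rho_eps e (x - y)) \<le> 2"
proof -
  define b where "b = beta_eps e"
  define a where "a = e ^ 6"
  have b: "b > 0" unfolding b_def using eps_facts assms by auto
  have a: "a > 0" unfolding a_def using assms by auto
  define R where "R u = (ln (cosh (b * (u + a))) - ln (cosh (b * (u - a)))) / (2 * a * b)" for u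
  have Rb: "\<bar>R u\<bar> \<le> 1" for u
  proof -
    have "\<bar>ln (cosh (b * (u + a))) - ln (cosh (b * (u - a)))\<bar> \<le> \<bar>b * (u + a) - b * (u - a)\<bar>"
      by (rule lncosh_lip)
    also have "\<dots> = 2 * a * b" using a b by (simp add: algebra_simps)
    finally show ?thesis unfolding R_def using a b by (simp add: abs_div divide_le_eq)
  qed
  have der: "((\<lambda>x. R (x - y)) has_real_derivative rho_eps e (x - y)) (at x)" for x
  proof -
    have d1: "((\<lambda>x. ln (cosh (b * (x - y + a)))) has_real_derivative tanh (b * (x - y + a)) * b) (at x)"
      by (rule DERIV_chain2[OF lncosh_deriv]) (auto intro!: derivative_eq_intros)
    have d2: "((\<lambda>x. ln (cosh (b * (x - y - a)))) has_real_derivative tanh (b * (x - y - a)) * b) (at x)"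
      by (rule DERIV_chain2[OF lncosh_deriv]) (auto intro!: derivative_eq_intros)
    have "((\<lambda>x. R (x - y)) has_real_derivative (tanh (b * (x - y + a)) * b - tanh (b * (x - y - a)) * b) / (2 * a * b)) (at x)"
      unfolding R_def using DERIV_cdivide[OF DERIV_diff[OF d1 d2], of "2 * a * b"] by simp
    moreover have "(tanh (b * (x - y + a)) * b - tanh (b * (x - y - a)) * b) / (2 * a * b) = rho_eps e (x - y)"
      unfolding rho_eps_def b_def[symmetric] a_def[symmetric] using a b by (simp add: field_simps)
    ultimately show ?thesis by simp
  qed
  have hi: "((\<lambda>x. rho_eps e (x - y)) has_integral (R (1 - y) - R (0 - y))) {0..1}"
    by (rule fundamental_theorem_of_calculus)
      (auto intro!: has_field_derivative_at_within[OF der] simp: has_real_derivative_iff_has_vector_derivative[symmetric])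
  then show "((\<lambda>x. rho_eps e (x - y)) integrable_on {0..1})" by blast
  have "integral {0..1} (\<lambda>x. rho_eps e (x - y)) = R (1 - y) - R (0 - y)" using hi by (simp add: has_integral_iff)
  also have "\<dots> \<le> 2" using Rb[of "1 - y"] Rb[of "0 - y"] by (simp add: abs_le_iff)
  finally show "integral {0..1} (\<lambda>x. rho_eps e (x - y)) \<le> 2" .
qed



definition LipF :: "(real \<Rightarrow> real) \<Rightarrow> bool" where
  "LipF f \<longleftrightarrow> (\<exists>K. \<forall>t t'. \<bar>f t - f t'\<bar> \<le> K * \<bar>t - t'\<bar>)"
definition BdF :: "(real \<Rightarrow> real) \<Rightarrow> bool" where
  "BdF f \<longleftrightarrow> (\<exists>M. \<forall>t. \<bar>f t\<bar> \<le> M)"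

lemma lip_const: "LipF (\<lambda>t. c)" unfolding LipF_def by (intro exI[of _ 0]) simp
lemma lip_id: "LipF (\<lambda>t. t)" unfolding LipF_def by (intro exI[of _ 1]) simp
lemma lip_add: "LipF f \<Longrightarrow> LipF g \<Longrightarrow> LipF (\<lambda>t. f t + g t)"
  unfolding LipF_def
proof (elim exE)
  fix K1 K2 assume 1: "\<forall>t t'. \<bar>f t - f t'\<bar> \<le> K1 * \<bar>t - t'\<bar>" and 2: "\<forall>t t'. \<bar>g t - g t'\<bar> \<le> K2 * \<bar>t - t'\<bar>"
  show "\<exists>K. \<forall>t t'. \<bar>f t + g t - (f t' + g t')\<bar> \<le> K * \<bar>t - t'\<bar>"
  proof (intro exI allI)
    fix t t'
    have "\<bar>f t + g t - (f t' + g t')\<bar> \<le> \<bar>f t - f t'\<bar> + \<bar>g t - g t'\<bar>" by linarith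
    also have "\<dots> \<le> K1 * \<bar>t - t'\<bar> + K2 * \<bar>t - t'\<bar>" using 1 2 by (meson add_mono)
    finally show "\<bar>f t + g t - (f t' + g t')\<bar> \<le> (K1 + K2) * \<bar>t - t'\<bar>" by (simp add: distrib_right)
  qed
qed
lemma lip_diff: "LipF f \<Longrightarrow> LipF g \<Longrightarrow> LipF (\<lambda>t. f t - g t)"
  unfolding LipF_def
proof (elim exE)
  fix K1 K2 assume 1: "\<forall>t t'. \<bar>f t - f t'\<bar> \<le> K1 * \<bar>t - t'\<bar>" and 2: "\<forall>t t'. \<bar>g t - g t'\<bar> \<le> K2 * \<bar>t - t'\<bar>"
  show "\<exists>K. \<forall>t t'. \<bar>f t - g t - (f t' - g t')\<bar> \<le> K * \<bar>t - t'\<bar>"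
  proof (intro exI allI)
    fix t t'
    have "\<bar>f t - g t - (f t' - g t')\<bar> \<le> \<bar>f t - f t'\<bar> + \<bar>g t - g t'\<bar>" by linarith
    also have "\<dots> \<le> K1 * \<bar>t - t'\<bar> + K2 * \<bar>t - t'\<bar>" using 1 2 by (meson add_mono)
    finally show "\<bar>f t - g t - (f t' - g t')\<bar> \<le> (K1 + K2) * \<bar>t - t'\<bar>" by (simp add: distrib_right)
  qed
qed
lemma lip_cmult: "LipF f \<Longrightarrow> LipF (\<lambda>t. c * f t)"
  unfolding LipF_def
proof (elim exE)
  fix K assume 1: "\<forall>t t'. \<bar>f t - f t'\<bar> \<le> K * \<bar>t - t'\<bar>"
  show "\<exists>K. \<forall>t t'. \<bar>c * f t - c * f t'\<bar> \<le> K * \<bar>t - t'\<bar>"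
  proof (intro exI allI)
    fix t t'
    have "\<bar>c * f t - c * f t'\<bar> = \<bar>c\<bar> * \<bar>f t - f t'\<bar>" by (simp add: abs_mult right_diff_distrib[symmetric])
    also have "\<dots> \<le> \<bar>c\<bar> * (K * \<bar>t - t'\<bar>)" using 1 by (intro mult_left_mono) auto
    finally show "\<bar>c * f t - c * f t'\<bar> \<le> (\<bar>c\<bar> * K) * \<bar>t - t'\<bar>" by simp
  qed
qed
lemma lip_div: "LipF f \<Longrightarrow> LipF (\<lambda>t. f t / c)"
  using lip_cmult[of f "inverse c"] by (simp add: divide_inverse mult.commute)
lemma lip_tanh: "LipF f \<Longrightarrow> LipF (\<lambda>t. tanh (f t))"
  unfolding LipF_def
proof (elim exE)
  fix K assume 1: "\<forall>t t'. \<bar>f t - f t'\<bar> \<le> K * \<bar>t - t'\<bar>"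
  show "\<exists>K. \<forall>t t'. \<bar>tanh (f t) - tanh (f t')\<bar> \<le> K * \<bar>t - t'\<bar>"
    using tanh_lip 1 order_trans by blast
qed
lemma bd_const: "BdF (\<lambda>t. c)" unfolding BdF_def by auto
lemma bd_tanh: "BdF (\<lambda>t. tanh (f t))" unfolding BdF_def
  using tanh_real_bounds by (intro exI[of _ 1]) (auto simp: abs_le_iff less_imp_le)
lemma bd_diff: "BdF f \<Longrightarrow> BdF g \<Longrightarrow> BdF (\<lambda>t. f t - g t)"
  unfolding BdF_def
proof (elim exE)
  fix M1 M2 assume 1: "\<forall>t. \<bar>f t\<bar> \<le> M1" and 2: "\<forall>t. \<bar>g t\<bar> \<le> M2"
  show "\<exists>M. \<forall>t. \<bar>f t - g t\<bar> \<le> M"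
  proof (intro exI allI)
    fix t show "\<bar>f t - g t\<bar> \<le> M1 + M2" using 1 2 abs_triangle_ineq4[of "f t" "g t"] by (meson add_mono order_trans)
  qed
qed
lemma bd_mult: "BdF f \<Longrightarrow> BdF g \<Longrightarrow> BdF (\<lambda>t. f t * g t)"
  unfolding BdF_def
proof (elim exE)
  fix M1 M2 assume 1: "\<forall>t. \<bar>f t\<bar> \<le> M1" and 2: "\<forall>t. \<bar>g t\<bar> \<le> M2"
  show "\<exists>M. \<forall>t. \<bar>f t * g t\<bar> \<le> M"
  proof (intro exI allI)
    fix t
    have "0 \<le> M1" using 1 abs_ge_zero order_trans by blast
    then show "\<bar>f t * g t\<bar> \<le> M1 * M2" unfolding abs_mult using 1 2
      by (intro mult_mono) auto
  qed
qed
lemma bd_div: "BdF f \<Longrightarrow> BdF (\<lambda>t. f t / c)"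
  using bd_mult[of f "\<lambda>_. inverse c"] bd_const by (simp add: divide_inverse)
lemma lip_mult: "LipF f \<Longrightarrow> BdF f \<Longrightarrow> LipF g \<Longrightarrow> BdF g \<Longrightarrow> LipF (\<lambda>t. f t * g t)"
  unfolding LipF_def BdF_def
proof (elim exE)
  fix K1 K2 M1 M2 assume 1: "\<forall>t t'. \<bar>f t - f t'\<bar> \<le> K1 * \<bar>t - t'\<bar>" and 2: "\<forall>t t'. \<bar>g t - g t'\<bar> \<le> K2 * \<bar>t - t'\<bar>"
    and 3: "\<forall>t. \<bar>f t\<bar> \<le> M1" and 4: "\<forall>t. \<bar>g t\<bar> \<le> M2"
  show "\<exists>K. \<forall>t t'. \<bar>f t * g t - f t' * g t'\<bar> \<le> K * \<bar>t - t'\<bar>"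
  proof (intro exI allI)
    fix t t'
    have M1: "0 \<le> M1" using 3 abs_ge_zero order_trans by blast
    have M2: "0 \<le> M2" using 4 abs_ge_zero order_trans by blast
    have "f t * g t - f t' * g t' = f t * (g t - g t') + g t' * (f t - f t')" by algebra
    then have "\<bar>f t * g t - f t' * g t'\<bar> = \<bar>f t * (g t - g t') + g t' * (f t - f t')\<bar>" by simp
    also have "\<dots> \<le> \<bar>f t * (g t - g t')\<bar> + \<bar>g t' * (f t - f t')\<bar>" by (rule abs_triangle_ineq)
    also have "\<dots> = \<bar>f t\<bar> * \<bar>g t - g t'\<bar> + \<bar>g t'\<bar> * \<bar>f t - f t'\<bar>" by (simp add: abs_mult)
    also have "\<dots> \<le> M1 * (K2 * \<bar>t - t'\<bar>) + M2 * (K1 * \<bar>t - t'\<bar>)"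
    proof (rule add_mono)
      show "\<bar>f t\<bar> * \<bar>g t - g t'\<bar> \<le> M1 * (K2 * \<bar>t - t'\<bar>)"
        using 3 2 M1 by (intro mult_mono) auto
      show "\<bar>g t'\<bar> * \<bar>f t - f t'\<bar> \<le> M2 * (K1 * \<bar>t - t'\<bar>)"
        using 4 1 M2 by (intro mult_mono) auto
    qed
    finally show "\<bar>f t * g t - f t' * g t'\<bar> \<le> (M1 * K2 + M2 * K1) * \<bar>t - t'\<bar>"
      by (simp add: algebra_simps)
  qed
qed

lemmas lip_rules = lip_mult lip_tanh lip_cmult lip_div lip_add lip_diff lip_id lip_const
lemmas bd_rules = bd_mult bd_div bd_diff bd_tanh bd_const

lemma abs_int_le:
  fixes f g :: "real \<Rightarrow> real"
  assumes "\<And>x. x \<in> S \<Longrightarrow> \<bar>f x\<bar> \<le> g x" "g integrable_on S"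
  shows "\<bar>integral S f\<bar> \<le> integral S g"
proof (cases "f integrable_on S")
  case True
  then show ?thesis using integral_norm_bound_integral[OF True assms(2)] assms(1) by auto
next
  case False
  then have "integral S f = 0" by (rule not_integrable_integral)
  moreover have "0 \<le> integral S g"
  proof (rule integral_nonneg[OF assms(2)])
    fix x assume "x \<in> S"
    then show "0 \<le> g x" using assms(1)[of x] by linarith
  qed
  ultimately show ?thesis by simp
qed


lemma chiLB: "LipF (\<lambda>t. chi_eps e T ((t + s) / 2))" "BdF (\<lambda>t. chi_eps e T ((t + s) / 2))"
    unfolding chi_eps_def
    by (intro lip_rules bd_rules)+
lemma rhoLB: "LipF (\<lambda>t. rho_eps e (t - s))" "BdF (\<lambda>t. rho_eps e (t - s))"
    unfolding rho_eps_def
    by (intro lip_rules bd_rules)+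
lemma phibar_lip:
  "\<exists>K M. \<forall>t t'. \<bar>phibar_eps e T y s x t - phibar_eps e T y s x t'\<bar> \<le> K * \<bar>t - t'\<bar> \<and> \<bar>phibar_eps e T y s x t\<bar> \<le> M"
proof -
  have "LipF (\<lambda>t. chi_eps e T ((t + s) / 2) * rho_eps e (x - y) * rho_eps e (t - s))"
    by (intro lip_mult[OF lip_mult[OF chiLB(1) chiLB(2) lip_const bd_const] bd_mult[OF chiLB(2) bd_const] rhoLB])
  moreover have "BdF (\<lambda>t. chi_eps e T ((t + s) / 2) * rho_eps e (x - y) * rho_eps e (t - s))"
    by (intro bd_mult[OF bd_mult[OF chiLB(2) bd_const] rhoLB(2)])
  ultimately show ?thesis unfolding LipF_def BdF_def phibar_eps_def by blast
qed
lemma tanh_affine_deriv: "((\<lambda>t. tanh (a * (t + b))) has_real_derivative (1 - tanh (a * (t + b)) ^ 2) * a) (at t)"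
  by (auto intro!: derivative_eq_intros)
definition HasD :: "(real \<Rightarrow> real) \<Rightarrow> bool" where
  "HasD f \<longleftrightarrow> (\<forall>t. \<exists>D. (f has_real_derivative D) (at t))"
lemma hd_const: "HasD (\<lambda>t. c)" unfolding HasD_def by (auto intro: DERIV_const)
lemma hd_id: "HasD (\<lambda>t. t)" unfolding HasD_def by (auto intro: DERIV_ident)
lemma hd_add: assumes "HasD f" "HasD g" shows "HasD (\<lambda>t. f t + g t)" unfolding HasD_def
proof
  fix t
  obtain D1 where D1: "(f has_real_derivative D1) (at t)" using assms(1) unfolding HasD_def by blast
  obtain D2 where D2: "(g has_real_derivative D2) (at t)" using assms(2) unfolding HasD_def by blast
  show "\<exists>D. ((\<lambda>t. f t + g t) has_real_derivative D) (at t)" using DERIV_add[OF D1 D2] by blast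
qed
lemma hd_diff: assumes "HasD f" "HasD g" shows "HasD (\<lambda>t. f t - g t)" unfolding HasD_def
proof
  fix t
  obtain D1 where D1: "(f has_real_derivative D1) (at t)" using assms(1) unfolding HasD_def by blast
  obtain D2 where D2: "(g has_real_derivative D2) (at t)" using assms(2) unfolding HasD_def by blast
  show "\<exists>D. ((\<lambda>t. f t - g t) has_real_derivative D) (at t)" using DERIV_diff[OF D1 D2] by blast
qed
lemma hd_mult: assumes "HasD f" "HasD g" shows "HasD (\<lambda>t. f t * g t)" unfolding HasD_def
proof
  fix t
  obtain D1 where D1: "(f has_real_derivative D1) (at t)" using assms(1) unfolding HasD_def by blast
  obtain D2 where D2: "(g has_real_derivative D2) (at t)" using assms(2) unfolding HasD_def by blast
  show "\<exists>D. ((\<lambda>t. f t * g t) has_real_derivative D) (at t)" using DERIV_mult[OF D1 D2] by blast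
qed
lemma hd_div: assumes "HasD f" shows "HasD (\<lambda>t. f t / c)" unfolding HasD_def
proof
  fix t
  obtain D1 where D1: "(f has_real_derivative D1) (at t)" using assms(1) unfolding HasD_def by blast
  show "\<exists>D. ((\<lambda>t. f t / c) has_real_derivative D) (at t)" using DERIV_cdivide[OF D1] by blast
qed
lemma hd_tanh: "HasD f \<Longrightarrow> HasD (\<lambda>t. tanh (f t))" unfolding HasD_def
proof (intro allI)
  fix t assume "\<forall>t. \<exists>D. (f has_real_derivative D) (at t)"
  then obtain D where D: "(f has_real_derivative D) (at t)" by blast
  have "((\<lambda>t. tanh (f t)) has_real_derivative (1 - tanh (f t) ^ 2) * D) (at t)"
    using D by (auto intro!: derivative_eq_intros)
  then show "\<exists>D. ((\<lambda>t. tanh (f t)) has_real_derivative D) (at t)" by blast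
qed
lemmas hd_rules = hd_mult hd_div hd_tanh hd_add hd_diff hd_id hd_const

lemma phibar_deriv:
  "((\<lambda>\<tau>. phibar_eps e T y s x \<tau>) has_real_derivative deriv (\<lambda>\<tau>. phibar_eps e T y s x \<tau>) t) (at t)"
proof -
  have c: "HasD (\<lambda>t. chi_eps e T ((t + s) / 2))" unfolding chi_eps_def by (intro hd_rules)+
  have r: "HasD (\<lambda>t. rho_eps e (t - s))" unfolding rho_eps_def by (intro hd_rules)+
  have "HasD (\<lambda>t. chi_eps e T ((t + s) / 2) * rho_eps e (x - y) * rho_eps e (t - s))"
    by (intro hd_mult[OF hd_mult[OF c hd_const] r])
  then have "\<exists>D. ((\<lambda>\<tau>. phibar_eps e T y s x \<tau>) has_real_derivative D) (at t)"
    unfolding HasD_def phibar_eps_def by blast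
  then show ?thesis using DERIV_deriv_iff_real_differentiable real_differentiable_def by blast
qed


theorem lemmaA6:
  fixes T :: real
  assumes "T > 0"
  shows "\<exists>C>0. \<forall>\<epsilon> B :: real. \<forall>z zt :: real \<Rightarrow> real \<Rightarrow> real \<Rightarrow> real \<Rightarrow> real.
     0 < \<epsilon> \<longrightarrow> \<epsilon> < 1 \<longrightarrow> T > 4 * \<epsilon> \<longrightarrow> B > 0 \<longrightarrow>
     (\<exists>L. \<forall>x t y s x' t' y' s'.
          x \<in> {0..1} \<longrightarrow> t \<in> {0..T} \<longrightarrow> y \<in> {0..1} \<longrightarrow> s \<in> {0..T} \<longrightarrow>
          x' \<in> {0..1} \<longrightarrow> t' \<in> {0..T} \<longrightarrow> y' \<in> {0..1} \<longrightarrow> s' \<in> {0..T} \<longrightarrow>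
          \<bar>z x t y s - z x' t' y' s'\<bar> \<le> L * (\<bar>x - x'\<bar> + \<bar>t - t'\<bar> + \<bar>y - y'\<bar> + \<bar>s - s'\<bar>)) \<longrightarrow>
     (\<forall>x y s. x \<in> {0..1} \<longrightarrow> y \<in> {0..1} \<longrightarrow> s \<in> {0..T} \<longrightarrow>
          (AE t in lborel. t \<in> {0<..<T} \<longrightarrow>
             ((\<lambda>\<tau>. z x \<tau> y s) has_real_derivative zt x t y s) (at t))) \<longrightarrow>
     (\<forall>x t y s. x \<in> {0..1} \<longrightarrow> t \<in> {0..T} \<longrightarrow> y \<in> {0..1} \<longrightarrow> s \<in> {0..T} \<longrightarrow>
          \<bar>z x t y s\<bar> \<le> B) \<longrightarrow>
     \<bar>integral {0..1} (\<lambda>y. integral {0..T} (\<lambda>s. integral {0..1} (\<lambda>x. integral {0..T} (\<lambda>t.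
          phibar_eps \<epsilon> T y s x t * zt x t y s
          + z x t y s * deriv (\<lambda>\<tau>. phibar_eps \<epsilon> T y s x \<tau>) t))))\<bar> \<le> C * B * \<epsilon>"
proof -
  define K0 where "K0 = 2 + 1728 * T"
  define C where "C = 4 * K0 * T"
  have K0: "K0 > 0" using assms unfolding K0_def by simp
  have Cpos: "C > 0" using assms K0 unfolding C_def by simp
  show ?thesis
  proof (rule exI[of _ C], intro conjI allI impI)
    show "C > 0" by (rule Cpos)
    fix e B :: real and z zt :: "real \<Rightarrow> real \<Rightarrow> real \<Rightarrow> real \<Rightarrow> real"
    assume e0: "0 < e" and e1: "e < 1" and eT: "T > 4 * e" and B0: "B > 0"
      and lipz: "\<exists>L. \<forall>x t y s x' t' y' s'.
          x \<in> {0..1} \<longrightarrow> t \<in> {0..T} \<longrightarrow> y \<in> {0..1} \<longrightarrow> s \<in> {0..T} \<longrightarrow>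
          x' \<in> {0..1} \<longrightarrow> t' \<in> {0..T} \<longrightarrow> y' \<in> {0..1} \<longrightarrow> s' \<in> {0..T} \<longrightarrow>
          \<bar>z x t y s - z x' t' y' s'\<bar> \<le> L * (\<bar>x - x'\<bar> + \<bar>t - t'\<bar> + \<bar>y - y'\<bar> + \<bar>s - s'\<bar>)"
      and der: "\<forall>x y s. x \<in> {0..1} \<longrightarrow> y \<in> {0..1} \<longrightarrow> s \<in> {0..T} \<longrightarrow>
          (AE t in lborel. t \<in> {0<..<T} \<longrightarrow>
             ((\<lambda>\<tau>. z x \<tau> y s) has_real_derivative zt x t y s) (at t))"
      and bnd: "\<forall>x t y s. x \<in> {0..1} \<longrightarrow> t \<in> {0..T} \<longrightarrow> y \<in> {0..1} \<longrightarrow> s \<in> {0..T} \<longrightarrow>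
          \<bar>z x t y s\<bar> \<le> B"
    obtain Lz where Lz: "\<forall>x t y s x' t' y' s'.
          x \<in> {0..1} \<longrightarrow> t \<in> {0..T} \<longrightarrow> y \<in> {0..1} \<longrightarrow> s \<in> {0..T} \<longrightarrow>
          x' \<in> {0..1} \<longrightarrow> t' \<in> {0..T} \<longrightarrow> y' \<in> {0..1} \<longrightarrow> s' \<in> {0..T} \<longrightarrow>
          \<bar>z x t y s - z x' t' y' s'\<bar> \<le> Lz * (\<bar>x - x'\<bar> + \<bar>t - t'\<bar> + \<bar>y - y'\<bar> + \<bar>s - s'\<bar>)"
      using lipz by blast
    have inner: "integral {0..T} (\<lambda>t. phibar_eps e T y s x t * zt x t y s
          + z x t y s * deriv (\<lambda>\<tau>. phibar_eps e T y s x \<tau>) t)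
        = phibar_eps e T y s x T * z x T y s - phibar_eps e T y s x 0 * z x 0 y s"
      if x: "x \<in> {0..1}" and y: "y \<in> {0..1}" and s: "s \<in> {0..T}" for x y s
    proof -
      obtain Kp Mp where KM: "\<forall>t t'. \<bar>phibar_eps e T y s x t - phibar_eps e T y s x t'\<bar> \<le> Kp * \<bar>t - t'\<bar>
          \<and> \<bar>phibar_eps e T y s x t\<bar> \<le> Mp"
        using phibar_lip by blast
      define g where "g t = phibar_eps e T y s x t * z x t y s" for t
      have glip: "\<bar>g t - g t'\<bar> \<le> (Mp * \<bar>Lz\<bar> + B * Kp) * \<bar>t - t'\<bar>"
        if t: "t \<in> {0..T}" and t': "t' \<in> {0..T}" for t t'
      proof -
        have "\<bar>z x t y s - z x t' y s\<bar> \<le> Lz * (\<bar>x - x\<bar> + \<bar>t - t'\<bar> + \<bar>y - y\<bar> + \<bar>s - s\<bar>)"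
          using Lz x y s t t' by blast
        then have zl: "\<bar>z x t y s - z x t' y s\<bar> \<le> \<bar>Lz\<bar> * \<bar>t - t'\<bar>"
          by (smt (verit, best) abs_ge_zero abs_ge_self mult_right_mono)
        have zb: "\<bar>z x t' y s\<bar> \<le> B" using bnd x y s t' by blast
        have "g t - g t' = phibar_eps e T y s x t * (z x t y s - z x t' y s)
            + z x t' y s * (phibar_eps e T y s x t - phibar_eps e T y s x t')"
          unfolding g_def by (simp add: algebra_simps)
        then have "\<bar>g t - g t'\<bar> \<le> \<bar>phibar_eps e T y s x t\<bar> * \<bar>z x t y s - z x t' y s\<bar>
            + \<bar>z x t' y s\<bar> * \<bar>phibar_eps e T y s x t - phibar_eps e T y s x t'\<bar>"
          by (metis abs_mult abs_triangle_ineq)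
        also have "\<dots> \<le> Mp * (\<bar>Lz\<bar> * \<bar>t - t'\<bar>) + B * (Kp * \<bar>t - t'\<bar>)"
        proof (rule add_mono)
          have Mp: "0 \<le> Mp" using KM abs_ge_zero order_trans by blast
          have pb: "\<bar>phibar_eps e T y s x t\<bar> \<le> Mp" using KM by blast
          show "\<bar>phibar_eps e T y s x t\<bar> * \<bar>z x t y s - z x t' y s\<bar> \<le> Mp * (\<bar>Lz\<bar> * \<bar>t - t'\<bar>)"
            by (rule mult_mono[OF pb zl Mp abs_ge_zero])
          have pl: "\<bar>phibar_eps e T y s x t - phibar_eps e T y s x t'\<bar> \<le> Kp * \<bar>t - t'\<bar>" using KM by blast
          show "\<bar>z x t' y s\<bar> * \<bar>phibar_eps e T y s x t - phibar_eps e T y s x t'\<bar> \<le> B * (Kp * \<bar>t - t'\<bar>)"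
            using B0 by (intro mult_mono[OF zb pl]) auto
        qed
        also have "\<dots> = (Mp * \<bar>Lz\<bar> + B * Kp) * \<bar>t - t'\<bar>" by (simp add: algebra_simps)
        finally show ?thesis .
      qed
      have ae: "AE t in lborel. t \<in> {0<..<T} \<longrightarrow> (g has_real_derivative
          (phibar_eps e T y s x t * zt x t y s + z x t y s * deriv (\<lambda>\<tau>. phibar_eps e T y s x \<tau>) t)) (at t)"
      proof (rule AE_mp[OF der[rule_format, OF x y s]], intro AE_I2 impI)
        fix t assume H: "t \<in> {0<..<T} \<longrightarrow> ((\<lambda>\<tau>. z x \<tau> y s) has_real_derivative zt x t y s) (at t)"
          and t: "t \<in> {0<..<T}"
        have "(g has_real_derivative (deriv (\<lambda>\<tau>. phibar_eps e T y s x \<tau>) t * z x t y s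
            + phibar_eps e T y s x t * zt x t y s)) (at t)"
          unfolding g_def using DERIV_mult[OF phibar_deriv[of e T y s x t] H[rule_format, OF t]] by (simp add: mult.commute)
        moreover have "deriv (\<lambda>\<tau>. phibar_eps e T y s x \<tau>) t * z x t y s + phibar_eps e T y s x t * zt x t y s
            = phibar_eps e T y s x t * zt x t y s + z x t y s * deriv (\<lambda>\<tau>. phibar_eps e T y s x \<tau>) t"
          by simp
        ultimately show "(g has_real_derivative
          (phibar_eps e T y s x t * zt x t y s + z x t y s * deriv (\<lambda>\<tau>. phibar_eps e T y s x \<tau>) t)) (at t)"
          by simp
      qed
      have "((\<lambda>t. phibar_eps e T y s x t * zt x t y s + z x t y s * deriv (\<lambda>\<tau>. phibar_eps e T y s x \<tau>) t)
          has_integral (g T - g 0)) {0..T}"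
        by (rule lip_ftc[OF assms glip ae])
      then show ?thesis unfolding g_def by (simp add: has_integral_iff)
    qed
    have ptb: "\<bar>phibar_eps e T y s x T * z x T y s - phibar_eps e T y s x 0 * z x 0 y s\<bar>
        \<le> 2 * B * K0 * e * rho_eps e (x - y)"
      if x: "x \<in> {0..1}" and y: "y \<in> {0..1}" and s: "s \<in> {0..T}" for x y s
    proof -
      define c where "c = rho_eps e (x - y)"
      have c0: "0 \<le> c" unfolding c_def using rho_nonneg[OF e0 e1] .
      have p0: "phibar_eps e T y s x 0 = (chi_eps e T (s / 2) * rho_eps e s) * c"
        unfolding phibar_eps_def c_def using rho_even[of e s] by simp
      have half: "(T + s) / 2 = T - (T - s) / 2" by (simp add: field_simps)
      have pT: "phibar_eps e T y s x T = (chi_eps e T ((T - s) / 2) * rho_eps e (T - s)) * c"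
        unfolding phibar_eps_def c_def half chi_sym by simp
      have k0: "chi_eps e T (s / 2) * rho_eps e s \<le> K0 * e"
        unfolding K0_def using s by (intro key[OF e0 e1]) (use eT in auto)
      have kT: "chi_eps e T ((T - s) / 2) * rho_eps e (T - s) \<le> K0 * e"
        unfolding K0_def using s by (intro key[OF e0 e1]) (use eT in auto)
      have n0: "0 \<le> chi_eps e T (s / 2) * rho_eps e s"
        using chi_nonneg[OF e0 e1] rho_nonneg[OF e0 e1] eT by simp
      have nT: "0 \<le> chi_eps e T ((T - s) / 2) * rho_eps e (T - s)"
        using chi_nonneg[OF e0 e1] rho_nonneg[OF e0 e1] eT by simp
      have zT: "\<bar>z x T y s\<bar> \<le> B" using bnd x y s assms by auto
      have z0: "\<bar>z x 0 y s\<bar> \<le> B" using bnd x y s assms by auto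
      have "\<bar>phibar_eps e T y s x T * z x T y s - phibar_eps e T y s x 0 * z x 0 y s\<bar>
          \<le> \<bar>phibar_eps e T y s x T\<bar> * \<bar>z x T y s\<bar> + \<bar>phibar_eps e T y s x 0\<bar> * \<bar>z x 0 y s\<bar>"
        by (metis abs_mult abs_triangle_ineq4)
      also have "\<dots> \<le> (K0 * e * c) * B + (K0 * e * c) * B"
      proof (rule add_mono)
        have "\<bar>phibar_eps e T y s x T\<bar> \<le> K0 * e * c" unfolding pT using nT kT c0
          by (simp add: abs_mult mult_right_mono)
        then show "\<bar>phibar_eps e T y s x T\<bar> * \<bar>z x T y s\<bar> \<le> (K0 * e * c) * B"
          using zT by (intro mult_mono) auto
        have "\<bar>phibar_eps e T y s x 0\<bar> \<le> K0 * e * c" unfolding p0 using n0 k0 c0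
          by (simp add: abs_mult mult_right_mono)
        then show "\<bar>phibar_eps e T y s x 0\<bar> * \<bar>z x 0 y s\<bar> \<le> (K0 * e * c) * B"
          using z0 by (intro mult_mono) auto
      qed
      also have "\<dots> = 2 * B * K0 * e * c" by simp
      finally show ?thesis unfolding c_def .
    qed
    have lx: "\<bar>integral {0..1} (\<lambda>x. integral {0..T} (\<lambda>t. phibar_eps e T y s x t * zt x t y s
          + z x t y s * deriv (\<lambda>\<tau>. phibar_eps e T y s x \<tau>) t))\<bar> \<le> 4 * B * K0 * e"
      if y: "y \<in> {0..1}" and s: "s \<in> {0..T}" for y s
    proof -
      have ri: "(\<lambda>x. rho_eps e (x - y)) integrable_on {0..1}" using rho_int[OF e0 e1] by blast
      have "\<bar>integral {0..1} (\<lambda>x. integral {0..T} (\<lambda>t. phibar_eps e T y s x t * zt x t y s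
          + z x t y s * deriv (\<lambda>\<tau>. phibar_eps e T y s x \<tau>) t))\<bar>
          \<le> integral {0..1} (\<lambda>x. (2 * B * K0 * e) * rho_eps e (x - y))"
      proof (rule abs_int_le)
        fix x :: real assume x: "x \<in> {0..1}"
        show "\<bar>integral {0..T} (\<lambda>t. phibar_eps e T y s x t * zt x t y s
          + z x t y s * deriv (\<lambda>\<tau>. phibar_eps e T y s x \<tau>) t)\<bar> \<le> (2 * B * K0 * e) * rho_eps e (x - y)"
          unfolding inner[OF x y s] using ptb[OF x y s] .
      next
        show "(\<lambda>x. (2 * B * K0 * e) * rho_eps e (x - y)) integrable_on {0..1}"
          using integrable_on_cmult_left[OF ri, of "2 * B * K0 * e"] by simp
      qed
      also have "\<dots> = (2 * B * K0 * e) * integral {0..1} (\<lambda>x. rho_eps e (x - y))"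
        using integral_mult[OF ri, of "2 * B * K0 * e"] by simp
      also have "\<dots> \<le> (2 * B * K0 * e) * 2"
        using rho_int[OF e0 e1, of y] B0 K0 e0 by (intro mult_left_mono) auto
      finally show ?thesis by simp
    qed
    have ls: "\<bar>integral {0..T} (\<lambda>s. integral {0..1} (\<lambda>x. integral {0..T} (\<lambda>t. phibar_eps e T y s x t * zt x t y s
          + z x t y s * deriv (\<lambda>\<tau>. phibar_eps e T y s x \<tau>) t)))\<bar> \<le> 4 * B * K0 * e * T"
      if y: "y \<in> {0..1}" for y
    proof -
      have "\<bar>integral {0..T} (\<lambda>s. integral {0..1} (\<lambda>x. integral {0..T} (\<lambda>t. phibar_eps e T y s x t * zt x t y s
          + z x t y s * deriv (\<lambda>\<tau>. phibar_eps e T y s x \<tau>) t)))\<bar> \<le> integral {0..T} (\<lambda>s::real. 4 * B * K0 * e)"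
        by (rule abs_int_le) (use lx y in auto)
      also have "\<dots> = 4 * B * K0 * e * T" using assms by simp
      finally show ?thesis .
    qed
    define F where "F y = integral {0..T} (\<lambda>s. integral {0..1} (\<lambda>x. integral {0..T} (\<lambda>t.
          phibar_eps e T y s x t * zt x t y s
          + z x t y s * deriv (\<lambda>\<tau>. phibar_eps e T y s x \<tau>) t)))" for y
    have ls': "\<bar>F y\<bar> \<le> 4 * B * K0 * e * T" if "y \<in> {0..1}" for y
      unfolding F_def using ls[OF that] .
    have "\<bar>integral {0..1} F\<bar> \<le> integral {0..1} (\<lambda>y::real. 4 * B * K0 * e * T)"
      by (rule abs_int_le[OF ls']) auto
    also have "\<dots> = C * B * e" unfolding C_def by simp
    finally have "\<bar>integral {0..1} F\<bar> \<le> C * B * e" .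
    then show "\<bar>integral {0..1} (\<lambda>y. integral {0..T} (\<lambda>s. integral {0..1} (\<lambda>x. integral {0..T} (\<lambda>t.
          phibar_eps e T y s x t * zt x t y s
          + z x t y s * deriv (\<lambda>\<tau>. phibar_eps e T y s x \<tau>) t))))\<bar> \<le> C * B * e"
      unfolding F_def[abs_def] .
  qed
qed


end
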